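(* Let $p\in\mathbb R^I$ be a probability vector with positive entries, and for $i\in\mathcal I$ define $$R_i:=\frac{\sum_{j\in\mathcal J}\mathfrak d(i,j)\theta_j-\sum_{\ell\in\mathcal I}\mathfrak d(i,\ell)\hat\lambda_\ell}{p_i}.$$ If $\vartheta_p\neq0$, then all $R_i$ are nonzero and $\dfrac1{\vartheta_p}=\sum_{i\in\mathcal I}\dfrac1{R_i}$.
   Context: Network and parameters: $\mathcal I=\{1,\dots,I\}$ (customer classes), $\mathcal J=\{1,\dots,J\}$ (server pools), and $\mathcal E\subset\mathcal I\times\mathcal J$ is a set of edges such that the bipartite graph $\mathcal G=(\mathcal I\cup\mathcal J,\mathcal E)$ is a tree. Write $i\sim j$ iff $(i,j)\in\mathcal E$, $\mathcal J(i)=\{j:i\sim j\}$, $\mathcal I(j)=\{i:i\sim j\}$. $\mathbb R^{\mathcal G}$ denotes the arrays $[\xi_{ij}]\in\mathbb R^{I\times J}$ with $\xi_{ij}=0$ whenever $i\not\sim j$, and $\mathbb R^{\mathcal G}_+$ its elements with nonnegative entries. For each $n\in\mathbb N$ there are arrival rates $\lambda^n_i>0$, service rates $\mu^n_{ij}>0$ ($i\sim j$) and pool sizes $N^n_j\in\mathbb N$, such that as $n\to\infty$: $\lambda^n_i/n\to\lambda_i>0$, $N^n_j/n\to\nu_j>0$, $\mu^n_{ij}\to\mu_{ij}>0$, $\hat\lambda^n_i:=(\lambda^n_i-n\lambda_i)/\sqrt n\to\hat\lambda_i\in\mathbb R$, $\hat\mu^n_{ij}:=\sqrt n(\mu^n_{ij}-\mu_{ij})\to\hat\mu_{ij}\in\mathbb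 R$, $\hat\nu^n_j:=\sqrt n(N^n_j/n-\nu_j)\to\hat\nu_j\in\mathbb R$. Complete resource pooling is assumed: the linear program "minimize $\max_{j}\sum_i\xi_{ij}$ over $\xi\in\mathbb R^{\mathcal G}_+$ subject to $\sum_j\mu_{ij}\nu_j\xi_{ij}=\lambda_i$ for all $i$" has a unique solution $\xi^*$, and it satisfies $\sum_{i}\xi^*_{ij}=1$ for all $j$ and $\xi^*_{ij}>0$ for all $i\sim j$. Put $z^*_{ij}:=\xi^*_{ij}\nu_j$ and $\theta_j:=\hat\nu_j+\sum_{i\in\mathcal I(j)}(\hat\mu_{ij}/\mu_{ij})z^*_{ij}$. SWSS parameter: for a probability vector $p\in\mathbb R^I$ with positive entries, $\vartheta_p$ is the (unique) optimal value of the linear program: maximize $\vartheta$ over $(\vartheta,\kappa)\in\mathbb R\times\mathbb R^{\mathcal G}$ subject to $\hat\lambda_i\le\sum_{j\in\mathcal J(i)}\mu_{ij}\kappa_{ij}-\vartheta p_i$ for all $i\in\mathcal I$ and $\sum_{i\in\mathcal I(j)}\kappa_{ij}=\theta_j$ for all $j\in\mathcal J$. Gains: for $i\in\mathcal I$, $j\in\mathcal J$, let $(i_1,j_1,i_2,j_2,\dots,i_m,j_m)$ be the unique shortest path in $\mathcal G$ from $i=i_1$ to $j=j_m$, and set $\mathfrak d(i,j):=\mu_{i_1j_1}\prod_{k=1}^{m-1}\mu_{i_{k+1}j_{k+1}}/\mu_{i_{k+1}j_k}$. For $i\ne i'$ in $\mathcal I$ with shortest path $(i_1,j_1,\dots,j_{m-1},i_m)$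 from $i=i_1$ to $i'=i_m$, set $\mathfrak d(i,i'):=\prod_{k=1}^{m-1}\mu_{i_kj_k}/\mu_{i_{k+1}j_k}$; and $\mathfrak d(i,i):=1$. *)

theory Defs
  imports "HOL-Analysis.Analysis"
begin

text \<open>Conventions: customer classes are 0,...,nI-1, server pools are 0,...,nJ-1.
  The edge set E is a set of pairs (i,j) (class i, pool j). Arrays in R^G are
  functions nat => nat => real.\<close>

definition graph_vertices :: "nat \<Rightarrow> nat \<Rightarrow> (nat + nat) set" where
  "graph_vertices nI nJ = Inl ` {..<nI} \<union> Inr ` {..<nJ}"

definition graph_adj :: "(nat \<times> nat) set \<Rightarrow> nat + nat \<Rightarrow> nat + nat \<Rightarrow> bool" where
  "graph_adj E u v = (\<exists>i j. (i, j) \<in> E \<and> ((u = Inl i \<and> v = Inr j) \<or> (u = Inr j \<and> v = Inl i)))"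

definition graph_connected :: "nat \<Rightarrow> nat \<Rightarrow> (nat \<times> nat) set \<Rightarrow> bool" where
  "graph_connected nI nJ E =
     (\<forall>u \<in> graph_vertices nI nJ. \<forall>v \<in> graph_vertices nI nJ. (graph_adj E)\<^sup>*\<^sup>* u v)"

definition graph_acyclic :: "(nat \<times> nat) set \<Rightarrow> bool" where
  "graph_acyclic E =
     (\<not> (\<exists>cs. length cs \<ge> 3 \<and> distinct cs \<and>
            (\<forall>k < length cs. graph_adj E (cs ! k) (cs ! ((k + 1) mod length cs)))))"

definition is_tree :: "nat \<Rightarrow> nat \<Rightarrow> (nat \<times> nat) set \<Rightarrow> bool" where
  "is_tree nI nJ E = (E \<subseteq> {..<nI} \<times> {..<nJ} \<and> graph_connected nI nJ E \<and> graph_acyclic E)"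

text \<open>A path (i_1,j_1,...,i_m,j_m) from class i to pool j, stored as lists
  is = [i_1..i_m], js = [j_1..j_m] (0-based).\<close>
definition cp_path :: "(nat \<times> nat) set \<Rightarrow> nat \<Rightarrow> nat \<Rightarrow> nat \<Rightarrow> nat list \<Rightarrow> nat list \<Rightarrow> bool" where
  "cp_path E i j m is js =
     (m \<ge> 1 \<and> length is = m \<and> length js = m \<and> is ! 0 = i \<and> js ! (m - 1) = j \<and>
      (\<forall>k < m. (is ! k, js ! k) \<in> E) \<and> (\<forall>k < m - 1. (is ! (k + 1), js ! k) \<in> E))"

definition cp_shortest :: "(nat \<times> nat) set \<Rightarrow> nat \<Rightarrow> nat \<Rightarrow> nat \<Rightarrow> nat list \<Rightarrow> nat list \<Rightarrow> bool" where
  "cp_shortest E i j m is js =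
     (cp_path E i j m is js \<and> (\<forall>m' is' js'. cp_path E i j m' is' js' \<longrightarrow> m \<le> m'))"

text \<open>A path (i_1,j_1,...,j_{m-1},i_m) from class i to class i'.\<close>
definition cc_path :: "(nat \<times> nat) set \<Rightarrow> nat \<Rightarrow> nat \<Rightarrow> nat \<Rightarrow> nat list \<Rightarrow> nat list \<Rightarrow> bool" where
  "cc_path E i i' m is js =
     (m \<ge> 1 \<and> length is = m \<and> length js = m - 1 \<and> is ! 0 = i \<and> is ! (m - 1) = i' \<and>
      (\<forall>k < m - 1. (is ! k, js ! k) \<in> E \<and> (is ! (k + 1), js ! k) \<in> E))"

definition cc_shortest :: "(nat \<times> nat) set \<Rightarrow> nat \<Rightarrow> nat \<Rightarrow> nat \<Rightarrow> nat list \<Rightarrow> nat list \<Rightarrow> bool" where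
  "cc_shortest E i i' m is js =
     (cc_path E i i' m is js \<and> (\<forall>m' is' js'. cc_path E i i' m' is' js' \<longrightarrow> m \<le> m'))"

text \<open>Gain d(i,j) from class i to pool j, along the unique shortest path.\<close>
definition gain_cp :: "(nat \<times> nat) set \<Rightarrow> (nat \<Rightarrow> nat \<Rightarrow> real) \<Rightarrow> nat \<Rightarrow> nat \<Rightarrow> real" where
  "gain_cp E mu i j =
     (case (THE (m, is, js). cp_shortest E i j m is js) of (m, is, js) \<Rightarrow>
        mu (is ! 0) (js ! 0) * (\<Prod>k \<in> {1..<m}. mu (is ! k) (js ! k) / mu (is ! k) (js ! (k - 1))))"

definition gain_cc :: "(nat \<times> nat) set \<Rightarrow> (nat \<Rightarrow> nat \<Rightarrow> real) \<Rightarrow> nat \<Rightarrow> nat \<Rightarrow> real" where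
  "gain_cc E mu i i' =
     (if i = i' then 1 else
       (case (THE (m, is, js). cc_shortest E i i' m is js) of (m, is, js) \<Rightarrow>
          (\<Prod>k < m - 1. mu (is ! k) (js ! k) / mu (is ! (k + 1)) (js ! k))))"

definition crp_feasible ::
  "nat \<Rightarrow> nat \<Rightarrow> (nat \<times> nat) set \<Rightarrow> (nat \<Rightarrow> nat \<Rightarrow> real) \<Rightarrow> (nat \<Rightarrow> real) \<Rightarrow> (nat \<Rightarrow> real)
   \<Rightarrow> (nat \<Rightarrow> nat \<Rightarrow> real) \<Rightarrow> bool" where
  "crp_feasible nI nJ E mu nu lam \<xi> =
     ((\<forall>i < nI. \<forall>j < nJ. \<xi> i j \<ge> 0 \<and> ((i, j) \<notin> E \<longrightarrow> \<xi> i j = 0)) \<and>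
      (\<forall>i < nI. (\<Sum>j < nJ. mu i j * nu j * \<xi> i j) = lam i))"

definition crp_objective :: "nat \<Rightarrow> nat \<Rightarrow> (nat \<Rightarrow> nat \<Rightarrow> real) \<Rightarrow> real" where
  "crp_objective nI nJ \<xi> = Max ((\<lambda>j. \<Sum>i < nI. \<xi> i j) ` {..<nJ})"

definition crp_optimal ::
  "nat \<Rightarrow> nat \<Rightarrow> (nat \<times> nat) set \<Rightarrow> (nat \<Rightarrow> nat \<Rightarrow> real) \<Rightarrow> (nat \<Rightarrow> real) \<Rightarrow> (nat \<Rightarrow> real)
   \<Rightarrow> (nat \<Rightarrow> nat \<Rightarrow> real) \<Rightarrow> bool" where
  "crp_optimal nI nJ E mu nu lam \<xi> =
     (crp_feasible nI nJ E mu nu lam \<xi> \<and>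
      (\<forall>\<xi>'. crp_feasible nI nJ E mu nu lam \<xi>' \<longrightarrow> crp_objective nI nJ \<xi> \<le> crp_objective nI nJ \<xi>'))"

definition theta_param ::
  "nat \<Rightarrow> (nat \<times> nat) set \<Rightarrow> (nat \<Rightarrow> nat \<Rightarrow> real) \<Rightarrow> (nat \<Rightarrow> real) \<Rightarrow> (nat \<Rightarrow> nat \<Rightarrow> real)
   \<Rightarrow> (nat \<Rightarrow> real) \<Rightarrow> (nat \<Rightarrow> nat \<Rightarrow> real) \<Rightarrow> nat \<Rightarrow> real" where
  "theta_param nI E mu nu mu_hat nu_hat \<xi>s j =
     nu_hat j + (\<Sum>i \<in> {i. i < nI \<and> (i, j) \<in> E}. (mu_hat i j / mu i j) * (\<xi>s i j * nu j))"

definition swss_feasible ::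
  "nat \<Rightarrow> nat \<Rightarrow> (nat \<times> nat) set \<Rightarrow> (nat \<Rightarrow> nat \<Rightarrow> real) \<Rightarrow> (nat \<Rightarrow> real) \<Rightarrow> (nat \<Rightarrow> real)
   \<Rightarrow> (nat \<Rightarrow> real) \<Rightarrow> real \<Rightarrow> (nat \<Rightarrow> nat \<Rightarrow> real) \<Rightarrow> bool" where
  "swss_feasible nI nJ E mu lam_hat theta p vt \<kappa> =
     ((\<forall>i < nI. \<forall>j < nJ. (i, j) \<notin> E \<longrightarrow> \<kappa> i j = 0) \<and>
      (\<forall>i < nI. lam_hat i \<le> (\<Sum>j \<in> {j. j < nJ \<and> (i, j) \<in> E}. mu i j * \<kappa> i j) - vt * p i) \<and>
      (\<forall>j < nJ. (\<Sum>i \<in> {i. i < nI \<and> (i, j) \<in> E}. \<kappa> i j) = theta j))"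

definition swss_param ::
  "nat \<Rightarrow> nat \<Rightarrow> (nat \<times> nat) set \<Rightarrow> (nat \<Rightarrow> nat \<Rightarrow> real) \<Rightarrow> (nat \<Rightarrow> real) \<Rightarrow> (nat \<Rightarrow> real)
   \<Rightarrow> (nat \<Rightarrow> real) \<Rightarrow> real" where
  "swss_param nI nJ E mu lam_hat theta p =
     Sup {vt. \<exists>\<kappa>. swss_feasible nI nJ E mu lam_hat theta p vt \<kappa>}"

end

theory Submission
  imports Defs
begin



lemma adj_sym: "graph_adj E u v = graph_adj E v u"
  unfolding graph_adj_def by blast

lemma adj_simps[simp]:
  "graph_adj E (Inl i) (Inr j) = ((i,j) \<in> E)"
  "graph_adj E (Inr j) (Inl i) = ((i,j) \<in> E)"
  "\<not> graph_adj E (Inl i) (Inl i')"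
  "\<not> graph_adj E (Inr j) (Inr j')"
  unfolding graph_adj_def by auto

lemma adj_flip: "(\<lambda>x y. graph_adj E y x) = graph_adj E"
  by (auto simp: fun_eq_iff adj_sym)

lemma succ_rev_adj[simp]: "successively (graph_adj E) (rev xs) = successively (graph_adj E) xs"
  by (metis adj_flip successively_rev)

definition walk :: "(nat \<times> nat) set \<Rightarrow> (nat + nat) list \<Rightarrow> bool" where
  "walk E vs = (vs \<noteq> [] \<and> successively (graph_adj E) vs)"

lemma cyc_nth:
  assumes "cs \<noteq> []" "successively R cs" "R (last cs) (hd cs)"
  shows "\<forall>k < length cs. R (cs ! k) (cs ! ((k + 1) mod length cs))"
proof (intro allI impI)
  fix k assume k: "k < length cs"
  show "R (cs ! k) (cs ! ((k + 1) mod length cs))"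
  proof (cases "Suc k < length cs")
    case True
    then show ?thesis using assms(2) successively_nth by fastforce
  next
    case False
    then have "k = length cs - 1" using k by auto
    moreover have "Suc k = length cs" using False k by linarith
    then have "(k+1) mod length cs = 0" by simp
    ultimately show ?thesis using assms by (simp add: hd_conv_nth last_conv_nth)
  qed
qed

lemma unique_path:
  assumes acyc: "graph_acyclic E"
  shows "walk E xs \<Longrightarrow> walk E ys \<Longrightarrow> distinct xs \<Longrightarrow> distinct ys \<Longrightarrow>
         hd xs = hd ys \<Longrightarrow> last xs = last ys \<Longrightarrow> xs = ys"
proof (induction xs arbitrary: ys)
  case Nil then show ?case by (simp add: walk_def)
next
  case (Cons u xs')
  obtain ys' where ys: "ys = u # ys'" using Cons.prems by (cases ys) (auto simp: walk_def)
  show ?case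
  proof (cases "xs' = []")
    case True
    then show ?thesis using Cons.prems ys by (cases "ys' = []") auto
  next
    case xne: False
    show ?thesis
    proof (cases "ys' = []")
      case True then show ?thesis using Cons.prems ys xne by auto
    next
      case yne: False
      obtain a xs2 where xa: "xs' = a # xs2" using xne by (cases xs') auto
      obtain b ys2 where yb: "ys' = b # ys2" using yne by (cases ys') auto
      show ?thesis
      proof (cases "a = b")
        case True
        have "xs' = ys'"
          apply (rule Cons.IH)
          using Cons.prems ys xne yne xa yb True by (auto simp: walk_def successively_Cons)
        then show ?thesis using ys by simp
      next
        case ab: False
        have "\<exists>x\<in>set xs'. x \<in> set ys'"
          using Cons.prems ys xne yne by (metis last.simps last_in_set)
        then obtain pre x post where sp: "xs' = pre @ x # post" "x \<in> set ys'"
           "\<forall>y\<in>set pre. y \<notin> set ys'"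
          using split_list_first_prop[of xs' "\<lambda>z. z \<in> set ys'"] by blast
        obtain q1 q2 where sq: "ys' = q1 @ x # q2" using sp(2) split_list by metis
        define cs where "cs = u # pre @ x # rev q1"
        have sx: "successively (graph_adj E) xs'" and sy: "successively (graph_adj E) ys'"
          using Cons.prems ys by (auto simp: walk_def successively_Cons)
        have ua: "graph_adj E u a" and ub: "graph_adj E u b"
          using Cons.prems ys xa yb by (auto simp: walk_def)
        have s1: "successively (graph_adj E) (pre @ [x])"
          using sx sp(1) by (simp add: successively_append_iff successively_Cons)
        have s2: "successively (graph_adj E) (x # rev q1)"
        proof (cases "q1 = []")
          case True then show ?thesis by simp
        next
          case False
          have "graph_adj E (last q1) x" using sy sq False
            by (simp add: successively_append_iff)
          then have "graph_adj E x (hd (rev q1))" using False by (simp add: hd_rev adj_sym)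
          moreover have "successively (graph_adj E) q1" using sy sq
            by (simp add: successively_append_iff)
          then have "successively (graph_adj E) (rev q1)" using succ_rev_adj by blast
          ultimately show ?thesis unfolding successively_Cons by blast
        qed
        have hpre: "hd (pre @ x # rev q1) = a" using sp(1) xa by (cases pre) auto
        have scs: "successively (graph_adj E) cs"
        proof -
          have "successively (graph_adj E) ((pre @ [x]) @ rev q1)"
            using s1 s2 by (auto simp: successively_append_iff successively_Cons)
          then show ?thesis unfolding cs_def using ua hpre
            by (simp add: successively_Cons)
        qed
        have lcs: "last cs = b"
          unfolding cs_def using sq yb by (cases q1) (auto simp: last_rev)
        have dcs: "distinct cs"
          unfolding cs_def using Cons.prems ys sp sq by auto
        have len: "length cs \<ge> 3"
        proof -
          have "\<not> (pre = [] \<and> q1 = [])" using sp(1) sq xa yb ab by auto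
          then show ?thesis unfolding cs_def by (auto simp: neq_Nil_conv)
        qed
        have "\<forall>k < length cs. graph_adj E (cs ! k) (cs ! ((k + 1) mod length cs))"
          by (rule cyc_nth) (use scs lcs ub adj_sym in \<open>auto simp: cs_def\<close>)
        then show ?thesis using acyc dcs len unfolding graph_acyclic_def by blast
      qed
    qed
  qed
qed




lemma walk_rtranclp:
  assumes "(graph_adj E)\<^sup>*\<^sup>* u v"
  shows "\<exists>vs. walk E vs \<and> hd vs = u \<and> last vs = v"
  using assms
proof (induction rule: rtranclp_induct)
  case base
  then show ?case by (rule exI[of _ "[u]"]) (simp add: walk_def)
next
  case (step y z)
  then obtain vs where vs: "walk E vs" "hd vs = u" "last vs = y" by blast
  show ?case
    by (rule exI[of _ "vs @ [z]"]) (use vs step.hyps(2) in \<open>auto simp: walk_def successively_append_iff\<close>)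
qed

lemma shortcut:
  assumes "walk E vs" "\<not> distinct vs"
  shows "\<exists>vs'. walk E vs' \<and> hd vs' = hd vs \<and> last vs' = last vs \<and> length vs' < length vs"
proof -
  obtain xs ys zs y where d: "vs = xs @ [y] @ ys @ [y] @ zs"
    using not_distinct_decomp[OF assms(2)] by blast
  have s: "successively (graph_adj E) vs" using assms(1) by (simp add: walk_def)
  have s1: "successively (graph_adj E) (xs @ [y])"
    using s unfolding d by (simp add: successively_append_iff)
  have s2: "successively (graph_adj E) (y # zs)"
  proof -
    have "successively (graph_adj E) ((xs @ [y] @ ys) @ (y # zs))" using s d by simp
    then show ?thesis by (simp only: successively_append_iff)
  qed
  have "successively (graph_adj E) ((xs @ [y]) @ zs)"
    using s1 s2 by (auto simp: successively_append_iff successively_Cons)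
  then show ?thesis
    by (intro exI[of _ "xs @ [y] @ zs"]) (auto simp: walk_def d hd_append)
qed

lemma distinct_walk:
  "walk E vs \<Longrightarrow> \<exists>vs'. walk E vs' \<and> distinct vs' \<and> hd vs' = hd vs \<and> last vs' = last vs
      \<and> length vs' \<le> length vs"
proof (induction "length vs" arbitrary: vs rule: less_induct)
  case less
  show ?case
  proof (cases "distinct vs")
    case True then show ?thesis using less.prems by blast
  next
    case False
    then obtain vs' where "walk E vs'" "hd vs' = hd vs" "last vs' = last vs" "length vs' < length vs"
      using shortcut less.prems by blast
    then show ?thesis using less.hyps[of vs'] by fastforce
  qed
qed

definition altv :: "nat \<Rightarrow> nat list \<Rightarrow> nat list \<Rightarrow> (nat + nat) list" where
  "altv n as bs = map (\<lambda>k. if even k then Inl (as ! (k div 2)) else Inr (bs ! (k div 2))) [0..<n]"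

lemma altv_len[simp]: "length (altv n as bs) = n" by (simp add: altv_def)

lemma altv_ne: "n > 0 \<Longrightarrow> altv n as bs \<noteq> []" by (simp add: altv_def)

lemma altv_nth: "k < n \<Longrightarrow> altv n as bs ! k = (if even k then Inl (as ! (k div 2)) else Inr (bs ! (k div 2)))"
  by (simp add: altv_def)

lemma altv_even: "2*t < n \<Longrightarrow> altv n as bs ! (2*t) = Inl (as ! t)"
  by (simp add: altv_nth)

lemma altv_odd: "2*t+1 < n \<Longrightarrow> altv n as bs ! (2*t+1) = Inr (bs ! t)"
  by (simp add: altv_nth)

lemma walk_nth: "walk E vs \<longleftrightarrow> vs \<noteq> [] \<and> (\<forall>k. Suc k < length vs \<longrightarrow> graph_adj E (vs ! k) (vs ! Suc k))"
  by (simp add: walk_def successively_conv_nth)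

lemma cp_iff:
  "cp_path E i j m as bs \<longleftrightarrow> (m \<ge> 1 \<and> length as = m \<and> length bs = m \<and> walk E (altv (2*m) as bs)
      \<and> hd (altv (2*m) as bs) = Inl i \<and> last (altv (2*m) as bs) = Inr j)"
proof -
  have hd: "m \<ge> 1 \<Longrightarrow> hd (altv (2*m) as bs) = Inl (as ! 0)"
  proof -
    assume "m \<ge> 1"
    then have "length (altv (2*m) as bs) > 0" by simp
    then have "altv (2*m) as bs \<noteq> []" by (metis length_greater_0_conv)
    then show ?thesis using altv_even[of 0 "2*m" as bs] \<open>m \<ge> 1\<close> by (simp add: hd_conv_nth)
  qed
  have lst: "m \<ge> 1 \<Longrightarrow> last (altv (2*m) as bs) = Inr (bs ! (m - 1))"
  proof -
    assume m: "m \<ge> 1"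
    then have "length (altv (2*m) as bs) > 0" by simp
    then have ne: "altv (2*m) as bs \<noteq> []" by (metis length_greater_0_conv)
    have e: "2*m - 1 = 2*(m-1)+1" using m by simp
    have "last (altv (2*m) as bs) = altv (2*m) as bs ! (2*(m-1)+1)"
      using ne e by (metis last_conv_nth altv_len)
    moreover have "2*(m-1)+1 < 2*m" using m by simp
    ultimately show ?thesis using altv_odd[of "m-1" "2*m" as bs] by simp
  qed
  have w: "m \<ge> 1 \<Longrightarrow> walk E (altv (2*m) as bs) \<longleftrightarrow>
     (\<forall>k < m. (as ! k, bs ! k) \<in> E) \<and> (\<forall>k < m - 1. (as ! (k + 1), bs ! k) \<in> E)"
  proof -
    assume m: "m \<ge> 1"
    have a: "graph_adj E (altv (2*m) as bs ! k) (altv (2*m) as bs ! Suc k) \<longleftrightarrow>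
        (if even k then (as ! (k div 2), bs ! (k div 2)) \<in> E else (as ! (k div 2 + 1), bs ! (k div 2)) \<in> E)"
      if "Suc k < 2*m" for k
      using that by (auto simp: altv_nth elim!: evenE oddE)
    show ?thesis
    proof
      assume W: "walk E (altv (2*m) as bs)"
      have "(as ! k, bs ! k) \<in> E" if "k < m" for k
        using W a[of "2*k"] that unfolding walk_nth by auto
      moreover have "(as ! (k+1), bs ! k) \<in> E" if "k < m - 1" for k
        using W a[of "2*k+1"] that unfolding walk_nth by auto
      ultimately show "(\<forall>k < m. (as ! k, bs ! k) \<in> E) \<and> (\<forall>k < m - 1. (as ! (k + 1), bs ! k) \<in> E)" by blast
    next
      assume R: "(\<forall>k < m. (as ! k, bs ! k) \<in> E) \<and> (\<forall>k < m - 1. (as ! (k + 1), bs ! k) \<in> E)"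
      have "graph_adj E (altv (2*m) as bs ! k) (altv (2*m) as bs ! Suc k)" if "Suc k < 2*m" for k
        using a[OF that] R that by (auto elim!: evenE oddE)
      then show "walk E (altv (2*m) as bs)" using m altv_ne[of "2*m" as bs] unfolding walk_nth by auto
    qed
  qed
  show ?thesis unfolding cp_path_def using hd lst w by auto
qed

lemma cc_iff:
  "cc_path E i i' m as bs \<longleftrightarrow> (m \<ge> 1 \<and> length as = m \<and> length bs = m - 1 \<and> walk E (altv (2*m-1) as bs)
      \<and> hd (altv (2*m-1) as bs) = Inl i \<and> last (altv (2*m-1) as bs) = Inl i')"
proof -
  have hd: "m \<ge> 1 \<Longrightarrow> hd (altv (2*m-1) as bs) = Inl (as ! 0)"
  proof -
    assume "m \<ge> 1"
    then have "length (altv (2*m-1) as bs) > 0" by simp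
    then have "altv (2*m-1) as bs \<noteq> []" by (metis length_greater_0_conv)
    then show ?thesis using altv_even[of 0 "2*m-1" as bs] \<open>m \<ge> 1\<close> by (simp add: hd_conv_nth)
  qed
  have lst: "m \<ge> 1 \<Longrightarrow> last (altv (2*m-1) as bs) = Inl (as ! (m - 1))"
  proof -
    assume m: "m \<ge> 1"
    then have "length (altv (2*m-1) as bs) > 0" by simp
    then have ne: "altv (2*m-1) as bs \<noteq> []" by (metis length_greater_0_conv)
    have e: "2*m - 1 - 1 = 2*(m-1)" using m by simp
    have "last (altv (2*m-1) as bs) = altv (2*m-1) as bs ! (2*(m-1))"
      using ne e by (metis last_conv_nth altv_len)
    moreover have "2*(m-1) < 2*m-1" using m by simp
    ultimately show ?thesis using altv_even[of "m-1" "2*m-1" as bs] by simp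
  qed
  have w: "m \<ge> 1 \<Longrightarrow> walk E (altv (2*m-1) as bs) \<longleftrightarrow>
     (\<forall>k < m - 1. (as ! k, bs ! k) \<in> E \<and> (as ! (k + 1), bs ! k) \<in> E)"
  proof -
    assume m: "m \<ge> 1"
    have a: "graph_adj E (altv (2*m-1) as bs ! k) (altv (2*m-1) as bs ! Suc k) \<longleftrightarrow>
        (if even k then (as ! (k div 2), bs ! (k div 2)) \<in> E else (as ! (k div 2 + 1), bs ! (k div 2)) \<in> E)"
      if "Suc k < 2*m-1" for k
      using that by (auto simp: altv_nth elim!: evenE oddE)
    show ?thesis
    proof
      assume W: "walk E (altv (2*m-1) as bs)"
      have "(as ! k, bs ! k) \<in> E" if "k < m - 1" for k
        using W a[of "2*k"] that unfolding walk_nth by auto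
      moreover have "(as ! (k+1), bs ! k) \<in> E" if "k < m - 1" for k
        using W a[of "2*k+1"] that unfolding walk_nth by auto
      ultimately show "(\<forall>k < m - 1. (as ! k, bs ! k) \<in> E \<and> (as ! (k + 1), bs ! k) \<in> E)" by blast
    next
      assume R: "(\<forall>k < m - 1. (as ! k, bs ! k) \<in> E \<and> (as ! (k + 1), bs ! k) \<in> E)"
      have "graph_adj E (altv (2*m-1) as bs ! k) (altv (2*m-1) as bs ! Suc k)" if "Suc k < 2*m-1" for k
        using a[OF that] R that by (auto elim!: evenE oddE)
      then show "walk E (altv (2*m-1) as bs)" using m altv_ne[of "2*m-1" as bs] unfolding walk_nth by auto
    qed
  qed
  show ?thesis unfolding cc_path_def using hd lst w by auto
qed




lemma adj_isl: "graph_adj E u v \<Longrightarrow> isl v = (\<not> isl u)"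
  by (cases u; cases v) auto

lemma walk_alt: "walk E vs \<Longrightarrow> isl (hd vs) \<Longrightarrow> k < length vs \<Longrightarrow> isl (vs ! k) = even k"
proof (induction k)
  case 0 then show ?case by (simp add: hd_conv_nth walk_def)
next
  case (Suc k)
  have "graph_adj E (vs ! k) (vs ! Suc k)" using Suc.prems unfolding walk_nth by blast
  then have "isl (vs ! Suc k) = (\<not> isl (vs ! k))" by (rule adj_isl)
  moreover have "isl (vs ! k) = even k" using Suc.IH Suc.prems by simp
  ultimately show ?case by simp
qed

lemma decode:
  assumes w: "walk E vs" and h: "hd vs = Inl i"
  shows "vs = altv (length vs) (map (\<lambda>t. projl (vs ! (2*t))) [0..<(length vs + 1) div 2])
                               (map (\<lambda>t. projr (vs ! (2*t+1))) [0..<length vs div 2])"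
    (is "vs = altv _ ?as ?bs")
proof (rule nth_equalityI)
  show "length vs = length (altv (length vs) ?as ?bs)" by simp
next
  fix k assume k: "k < length vs"
  have al: "isl (vs ! k) = even k" using walk_alt[OF w _ k] h by simp
  show "vs ! k = altv (length vs) ?as ?bs ! k"
  proof (cases "even k")
    case True
    then have "2 * (k div 2) = k" by simp
    moreover have "k div 2 < (length vs + 1) div 2" using k by linarith
    ultimately show ?thesis using True al k by (simp add: altv_nth sum.collapse)
  next
    case False
    then have "2 * (k div 2) + 1 = k" by simp
    moreover have "k div 2 < length vs div 2" using k False by presburger
    ultimately show ?thesis using False al k by (simp add: altv_nth sum.collapse)
  qed
qed

lemma cp_decode:
  assumes w: "walk E vs" and h: "hd vs = Inl i" and l: "last vs = Inr j"
  shows "\<exists>m as bs. cp_path E i j m as bs \<and> 2*m = length vs"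
proof -
  define n where "n = length vs"
  have n0: "n > 0" using w by (simp add: walk_def n_def)
  have "\<not> isl (vs ! (n - 1))" using l w n0 by (simp add: last_conv_nth walk_def n_def)
  moreover have "isl (vs ! (n - 1)) = even (n - 1)"
    by (rule walk_alt[OF w]) (use h n0 n_def in auto)
  ultimately have "odd (n - 1)" by simp
  then have "even n" using n0 by (cases n) auto
  then obtain m where m1: "n = 2*m" by (auto elim: evenE)
  then have m: "n = 2*m" "m \<ge> 1" using n0 by auto
  define as where "as = map (\<lambda>t. projl (vs ! (2*t))) [0..<(n + 1) div 2]"
  define bs where "bs = map (\<lambda>t. projr (vs ! (2*t+1))) [0..<n div 2]"
  have d: "vs = altv n as bs" using decode[OF w h] unfolding as_def bs_def n_def .
  have vs: "vs = altv (2*m) as bs" using d m(1) by simp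
  have len: "length as = m" "length bs = m" using m by (simp_all add: as_def bs_def)
  have "cp_path E i j m as bs" unfolding cp_iff
    using w h l m len by (simp only: vs[symmetric])
  then show ?thesis using m n_def by blast
qed

lemma cc_decode:
  assumes w: "walk E vs" and h: "hd vs = Inl i" and l: "last vs = Inl i'"
  shows "\<exists>m as bs. cc_path E i i' m as bs \<and> 2*m - 1 = length vs"
proof -
  define n where "n = length vs"
  have n0: "n > 0" using w by (simp add: walk_def n_def)
  have "isl (vs ! (n - 1))" using l w n0 by (simp add: last_conv_nth walk_def n_def)
  moreover have "isl (vs ! (n - 1)) = even (n - 1)"
    by (rule walk_alt[OF w]) (use h n0 n_def in auto)
  ultimately have "even (n - 1)" by simp
  then have "odd n" using n0 by (cases n) auto
  then obtain m0 where m1: "n = 2*m0 + 1" by (auto elim: oddE)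
  then have m: "n = 2*(m0+1) - 1" "m0 + 1 \<ge> 1" by auto
  define m where "m = m0 + 1"
  have m: "n = 2*m - 1" "m \<ge> 1" using m m_def by auto
  define as where "as = map (\<lambda>t. projl (vs ! (2*t))) [0..<(n + 1) div 2]"
  define bs where "bs = map (\<lambda>t. projr (vs ! (2*t+1))) [0..<n div 2]"
  have d: "vs = altv n as bs" using decode[OF w h] unfolding as_def bs_def n_def .
  have vs: "vs = altv (2*m - 1) as bs" using d m(1) by simp
  have e1: "(n+1) div 2 = m" "n div 2 = m - 1" using m by auto
  have len: "length as = m" "length bs = m - 1" using e1 by (simp_all add: as_def bs_def)
  have "cc_path E i i' m as bs" unfolding cc_iff
    using w h l m len by (simp only: vs[symmetric])
  then show ?thesis using m n_def by auto
qed

lemma altv_inj: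
  assumes "length as = length as'" "length bs = length bs'"
    "\<forall>t < length as. 2*t < n" "\<forall>t < length bs. 2*t+1 < n"
    "altv n as bs = altv n as' bs'"
  shows "as = as' \<and> bs = bs'"
proof
  show "as = as'"
  proof (rule nth_equalityI)
    fix t assume "t < length as"
    then show "as ! t = as' ! t" using assms altv_even[of t n as bs] altv_even[of t n as' bs'] by auto
  qed (use assms in simp)
  show "bs = bs'"
  proof (rule nth_equalityI)
    fix t assume "t < length bs"
    then show "bs ! t = bs' ! t" using assms altv_odd[of t n as bs] altv_odd[of t n as' bs'] by auto
  qed (use assms in simp)
qed




lemma cp_shortest_distinct:
  assumes "cp_shortest E i j m as bs" shows "distinct (altv (2*m) as bs)"
proof (rule ccontr)
  assume nd: "\<not> distinct (altv (2*m) as bs)"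
  have cp: "cp_path E i j m as bs" using assms by (simp add: cp_shortest_def)
  then have w: "walk E (altv (2*m) as bs)" "hd (altv (2*m) as bs) = Inl i" "last (altv (2*m) as bs) = Inr j"
    by (simp_all add: cp_iff)
  obtain vs' where vs': "walk E vs'" "hd vs' = Inl i" "last vs' = Inr j" "length vs' < 2*m"
    using shortcut[OF w(1) nd] w by auto
  obtain m' as' bs' where c: "cp_path E i j m' as' bs'" "2*m' = length vs'"
    using cp_decode[OF vs'(1-3)] by blast
  have "m \<le> m'" using assms c(1) by (auto simp: cp_shortest_def)
  then show False using c(2) vs'(4) by simp
qed

lemma cc_shortest_distinct:
  assumes "cc_shortest E i i' m as bs" shows "distinct (altv (2*m-1) as bs)"
proof (rule ccontr)
  assume nd: "\<not> distinct (altv (2*m-1) as bs)"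
  have cp: "cc_path E i i' m as bs" using assms by (simp add: cc_shortest_def)
  then have w: "walk E (altv (2*m-1) as bs)" "hd (altv (2*m-1) as bs) = Inl i" "last (altv (2*m-1) as bs) = Inl i'"
    "m \<ge> 1"
    by (simp_all add: cc_iff)
  obtain vs' where vs': "walk E vs'" "hd vs' = Inl i" "last vs' = Inl i'" "length vs' < 2*m-1"
    using shortcut[OF w(1) nd] w by auto
  obtain m' as' bs' where c: "cc_path E i i' m' as' bs'" "2*m' - 1 = length vs'"
    using cc_decode[OF vs'(1-3)] by blast
  have "m' \<ge> 1" using c(1) by (simp add: cc_path_def)
  have "m \<le> m'" using assms c(1) by (auto simp: cc_shortest_def)
  then show False using c(2) vs'(4) \<open>m' \<ge> 1\<close> by simp
qed

lemma cp_shortest_unique: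
  assumes acyc: "graph_acyclic E" and a: "cp_shortest E i j m as bs" and b: "cp_shortest E i j m' as' bs'"
  shows "m = m' \<and> as = as' \<and> bs = bs'"
proof -
  have "m \<le> m'" "m' \<le> m" using a b by (auto simp: cp_shortest_def)
  then have mm: "m = m'" by simp
  have pa: "cp_path E i j m as bs" and pb: "cp_path E i j m as' bs'"
    using a b mm by (simp_all add: cp_shortest_def)
  have "altv (2*m) as bs = altv (2*m) as' bs'"
    apply (rule unique_path[OF acyc])
    using pa pb cp_shortest_distinct[OF a] cp_shortest_distinct[of E i j m as' bs'] b mm
    by (simp_all add: cp_iff)
  moreover have "length as = m" "length as' = m" "length bs = m" "length bs' = m"
    using pa pb by (simp_all add: cp_iff)
  ultimately have "as = as' \<and> bs = bs'"
    by (intro altv_inj[of as as' bs bs' "2*m"]) auto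
  then show ?thesis using mm by simp
qed

lemma cc_shortest_unique:
  assumes acyc: "graph_acyclic E" and a: "cc_shortest E i i' m as bs" and b: "cc_shortest E i i' m' as' bs'"
  shows "m = m' \<and> as = as' \<and> bs = bs'"
proof -
  have "m \<le> m'" "m' \<le> m" using a b by (auto simp: cc_shortest_def)
  then have mm: "m = m'" by simp
  have pa: "cc_path E i i' m as bs" and pb: "cc_path E i i' m as' bs'"
    using a b mm by (simp_all add: cc_shortest_def)
  have "altv (2*m-1) as bs = altv (2*m-1) as' bs'"
    apply (rule unique_path[OF acyc])
    using pa pb cc_shortest_distinct[OF a] cc_shortest_distinct[of E i i' m as' bs'] b mm
    by (simp_all add: cc_iff)
  moreover have "length as = m" "length as' = m" "length bs = m - 1" "length bs' = m - 1"
    using pa pb by (simp_all add: cc_iff)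
  ultimately have "as = as' \<and> bs = bs'"
    by (intro altv_inj[of as as' bs bs' "2*m-1"]) auto
  then show ?thesis using mm by simp
qed

lemma cp_shortest_exists:
  assumes "(graph_adj E)\<^sup>*\<^sup>* (Inl i) (Inr j)"
  shows "\<exists>m as bs. cp_shortest E i j m as bs"
proof -
  obtain vs where "walk E vs" "hd vs = Inl i" "last vs = Inr j" using walk_rtranclp[OF assms] by blast
  then obtain m0 as0 bs0 where "cp_path E i j m0 as0 bs0" using cp_decode by blast
  then have ex: "\<exists>m as bs. cp_path E i j m as bs" by blast
  define P where "P = (\<lambda>m. \<exists>as bs. cp_path E i j m as bs)"
  have "P (Least P)" using ex LeastI_ex[of P] unfolding P_def by blast
  moreover have "\<forall>m' as' bs'. cp_path E i j m' as' bs' \<longrightarrow> Least P \<le> m'"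
    using Least_le[of P] unfolding P_def by blast
  ultimately show ?thesis unfolding P_def cp_shortest_def by blast
qed

lemma cc_shortest_exists:
  assumes "(graph_adj E)\<^sup>*\<^sup>* (Inl i) (Inl i')"
  shows "\<exists>m as bs. cc_shortest E i i' m as bs"
proof -
  obtain vs where "walk E vs" "hd vs = Inl i" "last vs = Inl i'" using walk_rtranclp[OF assms] by blast
  then obtain m0 as0 bs0 where "cc_path E i i' m0 as0 bs0" using cc_decode by blast
  then have ex: "\<exists>m as bs. cc_path E i i' m as bs" by blast
  define P where "P = (\<lambda>m. \<exists>as bs. cc_path E i i' m as bs)"
  have "P (Least P)" using ex LeastI_ex[of P] unfolding P_def by blast
  moreover have "\<forall>m' as' bs'. cc_path E i i' m' as' bs' \<longrightarrow> Least P \<le> m'"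
    using Least_le[of P] unfolding P_def by blast
  ultimately show ?thesis unfolding P_def cc_shortest_def by blast
qed

lemma gain_cp_path:
  assumes acyc: "graph_acyclic E" and r: "(graph_adj E)\<^sup>*\<^sup>* (Inl i) (Inr j)"
  shows "\<exists>m as bs. cp_path E i j m as bs \<and>
     gain_cp E mu i j = mu (as ! 0) (bs ! 0) * (\<Prod>k \<in> {1..<m}. mu (as ! k) (bs ! k) / mu (as ! k) (bs ! (k - 1)))"
proof -
  obtain m as bs where s: "cp_shortest E i j m as bs" using cp_shortest_exists[OF r] by blast
  have "(THE (m, as, bs). cp_shortest E i j m as bs) = (m, as, bs)"
  proof (rule the1_equality)
    show "\<exists>!x. (case x of (m, as, bs) \<Rightarrow> cp_shortest E i j m as bs)"
    proof (rule ex1I[of _ "(m, as, bs)"])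
      fix x assume "case x of (m, as, bs) \<Rightarrow> cp_shortest E i j m as bs"
      then show "x = (m, as, bs)" using cp_shortest_unique[OF acyc s] by (cases x) auto
    qed (use s in simp)
  qed (use s in simp)
  then show ?thesis using s unfolding gain_cp_def cp_shortest_def by auto
qed

lemma gain_cc_path:
  assumes acyc: "graph_acyclic E" and r: "(graph_adj E)\<^sup>*\<^sup>* (Inl i) (Inl i')" and ne: "i \<noteq> i'"
  shows "\<exists>m as bs. cc_path E i i' m as bs \<and>
     gain_cc E mu i i' = (\<Prod>k < m - 1. mu (as ! k) (bs ! k) / mu (as ! (k + 1)) (bs ! k))"
proof -
  obtain m as bs where s: "cc_shortest E i i' m as bs" using cc_shortest_exists[OF r] by blast
  have "(THE (m, as, bs). cc_shortest E i i' m as bs) = (m, as, bs)"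
  proof (rule the1_equality)
    show "\<exists>!x. (case x of (m, as, bs) \<Rightarrow> cc_shortest E i i' m as bs)"
    proof (rule ex1I[of _ "(m, as, bs)"])
      fix x assume "case x of (m, as, bs) \<Rightarrow> cc_shortest E i i' m as bs"
      then show "x = (m, as, bs)" using cc_shortest_unique[OF acyc s] by (cases x) auto
    qed (use s in simp)
  qed (use s in simp)
  then show ?thesis using s ne unfolding gain_cc_def cc_shortest_def by auto
qed




fun fw :: "(nat \<Rightarrow> nat \<Rightarrow> real) \<Rightarrow> nat + nat \<Rightarrow> nat + nat \<Rightarrow> real" where
  "fw mu (Inl i) (Inr j) = mu i j"
| "fw mu (Inr j) (Inl i) = 1 / mu i j"
| "fw mu _ _ = 1"

fun prodw :: "(nat \<Rightarrow> nat \<Rightarrow> real) \<Rightarrow> (nat + nat) list \<Rightarrow> real" where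
  "prodw mu [] = 1"
| "prodw mu [x] = 1"
| "prodw mu (x # y # xs) = fw mu x y * prodw mu (y # xs)"

lemma prodw_snoc: "vs \<noteq> [] \<Longrightarrow> prodw mu (vs @ [y]) = prodw mu vs * fw mu (last vs) y"
  by (induction mu vs rule: prodw.induct) auto

lemma fw_pos: "graph_adj E x y \<Longrightarrow> \<forall>(i, j) \<in> E. mu i j > 0 \<Longrightarrow> fw mu x y > 0"
  by (cases x; cases y) auto

lemma prodw_pos: "successively (graph_adj E) vs \<Longrightarrow> \<forall>(i, j) \<in> E. mu i j > 0 \<Longrightarrow> prodw mu vs > 0"
proof (induction mu vs rule: prodw.induct)
  case (3 mu x y xs)
  then show ?case using fw_pos[of E x y mu] by simp
qed auto

definition rpath :: "(nat \<times> nat) set \<Rightarrow> nat + nat \<Rightarrow> (nat + nat) list" where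
  "rpath E u = (THE vs. walk E vs \<and> distinct vs \<and> hd vs = Inl 0 \<and> last vs = u)"

definition Wt :: "(nat \<times> nat) set \<Rightarrow> (nat \<Rightarrow> nat \<Rightarrow> real) \<Rightarrow> nat + nat \<Rightarrow> real" where
  "Wt E mu u = prodw mu (rpath E u)"

lemma rpath_ex1:
  assumes acyc: "graph_acyclic E" and r: "(graph_adj E)\<^sup>*\<^sup>* (Inl 0) u"
  shows "\<exists>!vs. walk E vs \<and> distinct vs \<and> hd vs = Inl 0 \<and> last vs = u"
proof -
  obtain vs where "walk E vs" "hd vs = Inl 0" "last vs = u" using walk_rtranclp[OF r] by blast
  then obtain vs' where vs': "walk E vs' \<and> distinct vs' \<and> hd vs' = Inl 0 \<and> last vs' = u"
    using distinct_walk by fastforce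
  show ?thesis
    by (rule ex1I[of _ vs']) (use vs' unique_path[OF acyc] in auto)
qed

lemma rpath:
  assumes acyc: "graph_acyclic E" and r: "(graph_adj E)\<^sup>*\<^sup>* (Inl 0) u"
  shows "walk E (rpath E u) \<and> distinct (rpath E u) \<and> hd (rpath E u) = Inl 0 \<and> last (rpath E u) = u"
  unfolding rpath_def using theI'[OF rpath_ex1[OF assms]] .

lemma rpath_eq:
  assumes acyc: "graph_acyclic E" and r: "(graph_adj E)\<^sup>*\<^sup>* (Inl 0) u"
    and "walk E vs" "distinct vs" "hd vs = Inl 0" "last vs = u"
  shows "rpath E u = vs"
  unfolding rpath_def using the1_equality[OF rpath_ex1[OF acyc r]] assms(3-6) by blast

lemma Wt_pos:
  assumes acyc: "graph_acyclic E" and r: "(graph_adj E)\<^sup>*\<^sup>* (Inl 0) u" and mu: "\<forall>(i, j) \<in> E. mu i j > 0"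
  shows "Wt E mu u > 0"
  unfolding Wt_def using rpath[OF acyc r] prodw_pos mu by (auto simp: walk_def)

lemma Wt_edge:
  assumes acyc: "graph_acyclic E" and r: "(graph_adj E)\<^sup>*\<^sup>* (Inl 0) (Inl i)"
    and mu: "\<forall>(i, j) \<in> E. mu i j > 0" and e: "(i, j) \<in> E"
  shows "Wt E mu (Inr j) = Wt E mu (Inl i) * mu i j"
proof -
  have adj: "graph_adj E (Inl i) (Inr j)" using e by simp
  have rj: "(graph_adj E)\<^sup>*\<^sup>* (Inl 0) (Inr j)" using r adj by (rule rtranclp.rtrancl_into_rtrancl)
  define P where "P = rpath E (Inl i)"
  have P: "walk E P" "distinct P" "hd P = Inl 0" "last P = Inl i"
    using rpath[OF acyc r] unfolding P_def by auto
  have mpos: "mu i j > 0" using mu e by auto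
  show ?thesis
  proof (cases "Inr j \<in> set P")
    case False
    have "walk E (P @ [Inr j])" using P adj by (auto simp: walk_def successively_append_iff)
    moreover have "distinct (P @ [Inr j])" using P False by simp
    moreover have "hd (P @ [Inr j]) = Inl 0" using P by (auto simp: walk_def)
    ultimately have "rpath E (Inr j) = P @ [Inr j]" using rpath_eq[OF acyc rj] by simp
    then show ?thesis unfolding Wt_def P_def[symmetric]
      using prodw_snoc[of P mu "Inr j"] P by (auto simp: walk_def)
  next
    case True
    then obtain a b where ab: "P = a @ Inr j # b" by (meson split_list)
    have bne: "b \<noteq> []" using P(4) ab by (cases b) auto
    have "last P = last b" using ab bne by simp
    then have lb: "Inl i \<in> set b" using P(4) bne last_in_set by metis
    define Q where "Q = a @ [Inr j]"
    have sP: "successively (graph_adj E) ((a @ [Inr j]) @ b)" using P(1) ab by (simp add: walk_def)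
    have "successively (graph_adj E) (a @ [Inr j])" using sP successively_append_iff by blast
    then have wQ: "walk E Q" unfolding Q_def walk_def by simp
    have dQ: "distinct Q" using P(2) ab unfolding Q_def by simp
    have hQ: "hd Q = Inl 0" using P(3) ab unfolding Q_def by (cases a) auto
    have Qr: "rpath E (Inr j) = Q" using rpath_eq[OF acyc rj wQ dQ hQ] Q_def by simp
    have "successively (graph_adj E) (Q @ [Inl i])"
      using wQ e unfolding walk_def successively_append_iff Q_def by simp
    then have w2: "walk E (Q @ [Inl i])" by (simp add: walk_def)
    have d2: "distinct (Q @ [Inl i])" using dQ P(2) ab lb unfolding Q_def by auto
    have h2: "hd (Q @ [Inl i]) = Inl 0" using hQ unfolding Q_def by (cases a) auto
    have "rpath E (Inl i) = Q @ [Inl i]" using rpath_eq[OF acyc r w2 d2 h2] by simp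
    then have "Wt E mu (Inl i) = Wt E mu (Inr j) * (1 / mu i j)"
      unfolding Wt_def Qr using prodw_snoc[of Q mu "Inl i"] by (simp add: Q_def)
    then show ?thesis using mpos by (simp add: field_simps)
  qed
qed

lemma prod_tel1:
  fixes c :: "nat \<Rightarrow> real"
  assumes "\<forall>k. c k \<noteq> 0"
  shows "m \<ge> 1 \<Longrightarrow> (\<Prod>k \<in> {1..<m}. c k / c (k - 1)) = c (m - 1) / c 0"
proof (induction m)
  case 0 then show ?case by simp
next
  case (Suc m)
  show ?case
  proof (cases "m = 0")
    case True then show ?thesis using assms by simp
  next
    case False
    then have "(\<Prod>k \<in> {1..<Suc m}. c k / c (k - 1)) = (\<Prod>k \<in> {1..<m}. c k / c (k - 1)) * (c m / c (m - 1))"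
      by (simp add: prod.atLeastLessThan_Suc)
    also have "\<dots> = c (m - 1) / c 0 * (c m / c (m - 1))" using Suc False by simp
    also have "\<dots> = c m / c 0" using assms by simp
    finally show ?thesis by simp
  qed
qed

lemma prod_tel2:
  fixes d :: "nat \<Rightarrow> real"
  assumes "\<forall>k. d k \<noteq> 0"
  shows "(\<Prod>k < n. d (k + 1) / d k) = d n / d 0"
  by (induction n) (use assms in auto)




lemma gain_cp_W:
  assumes acyc: "graph_acyclic E" and r: "(graph_adj E)\<^sup>*\<^sup>* (Inl i) (Inr j)"
    and Wf: "\<forall>(a, b) \<in> E. Wf (Inr b) = Wf (Inl a) * mu a b \<and> Wf (Inl a) > 0 \<and> mu a b > 0"
  shows "gain_cp E mu i j = Wf (Inr j) / Wf (Inl i)"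
proof -
  obtain m as bs where cp: "cp_path E i j m as bs" and g:
    "gain_cp E mu i j = mu (as ! 0) (bs ! 0) * (\<Prod>k \<in> {1..<m}. mu (as ! k) (bs ! k) / mu (as ! k) (bs ! (k - 1)))"
    using gain_cp_path[OF acyc r] by blast
  have m1: "m \<ge> 1" and a0: "as ! 0 = i" and bl: "bs ! (m - 1) = j"
    and e1: "\<forall>k<m. (as ! k, bs ! k) \<in> E" and e2: "\<forall>k<m - 1. (as ! (k + 1), bs ! k) \<in> E"
    using cp unfolding cp_path_def by auto
  define c where "c k = (if k < m then Wf (Inr (bs ! k)) else 1)" for k
  have mu_eq: "mu a b = Wf (Inr b) / Wf (Inl a)" if "(a, b) \<in> E" for a b
    using Wf that by auto
  have cpos: "c k > 0" for k
  proof (cases "k < m")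
    case True
    then have "(as ! k, bs ! k) \<in> E" using e1 by blast
    then show ?thesis using Wf True unfolding c_def by fastforce
  qed (simp add: c_def)
  have fac: "mu (as ! k) (bs ! k) / mu (as ! k) (bs ! (k - 1)) = c k / c (k - 1)" if k: "k \<in> {1..<m}" for k
  proof -
    have ea: "(as ! k, bs ! k) \<in> E" using e1 k by auto
    have eb: "(as ! k, bs ! (k - 1)) \<in> E" using e2[rule_format, of "k - 1"] k by auto
    have wp: "Wf (Inl (as ! k)) > 0" using Wf ea by auto
    show ?thesis using k unfolding mu_eq[OF ea] mu_eq[OF eb] c_def using wp by (auto simp: field_simps)
  qed
  have "(\<Prod>k \<in> {1..<m}. mu (as ! k) (bs ! k) / mu (as ! k) (bs ! (k - 1))) = (\<Prod>k \<in> {1..<m}. c k / c (k - 1))"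
    using fac by (rule prod.cong[OF refl])
  also have "\<dots> = c (m - 1) / c 0" using prod_tel1[of c m] cpos m1 by (metis less_irrefl)
  finally have p: "(\<Prod>k \<in> {1..<m}. mu (as ! k) (bs ! k) / mu (as ! k) (bs ! (k - 1))) = c (m - 1) / c 0" .
  have e0: "(i, bs ! 0) \<in> E" using e1 m1 a0 by auto
  have "mu (as ! 0) (bs ! 0) = c 0 / Wf (Inl i)" using mu_eq[OF e0] a0 m1 unfolding c_def by simp
  then have "gain_cp E mu i j = c 0 / Wf (Inl i) * (c (m - 1) / c 0)" using g p by simp
  also have "\<dots> = c (m - 1) / Wf (Inl i)" using cpos[of 0] by simp
  also have "c (m - 1) = Wf (Inr j)" using bl m1 unfolding c_def by simp
  finally show ?thesis .
qed

lemma gain_cc_W: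
  assumes acyc: "graph_acyclic E" and r: "(graph_adj E)\<^sup>*\<^sup>* (Inl i) (Inl i')"
    and Wf: "\<forall>(a, b) \<in> E. Wf (Inr b) = Wf (Inl a) * mu a b \<and> Wf (Inl a) > 0 \<and> mu a b > 0"
    and wi: "Wf (Inl i) > 0"
  shows "gain_cc E mu i i' = Wf (Inl i') / Wf (Inl i)"
proof (cases "i = i'")
  case True then show ?thesis using wi by (simp add: gain_cc_def)
next
  case ne: False
  obtain m as bs where cp: "cc_path E i i' m as bs" and g:
    "gain_cc E mu i i' = (\<Prod>k < m - 1. mu (as ! k) (bs ! k) / mu (as ! (k + 1)) (bs ! k))"
    using gain_cc_path[OF acyc r ne] by blast
  have m1: "m \<ge> 1" and a0: "as ! 0 = i" and al: "as ! (m - 1) = i'"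
    and e: "\<forall>k<m - 1. (as ! k, bs ! k) \<in> E \<and> (as ! (k + 1), bs ! k) \<in> E"
    using cp unfolding cc_path_def by auto
  define d where "d k = (if k < m then Wf (Inl (as ! k)) else 1)" for k
  have mu_eq: "mu a b = Wf (Inr b) / Wf (Inl a)" if "(a, b) \<in> E" for a b
    using Wf that by auto
  have dpos: "d k > 0" for k
  proof (cases "k < m")
    case True
    show ?thesis
    proof (cases "k = 0")
      case True then show ?thesis using wi a0 m1 unfolding d_def by simp
    next
      case False
      have "(as ! (k - 1 + 1), bs ! (k - 1)) \<in> E" using e[rule_format, of "k - 1"] \<open>k < m\<close> False by auto
      then have "(as ! k, bs ! (k - 1)) \<in> E" using False by simp
      then show ?thesis using Wf \<open>k < m\<close> False unfolding d_def by fastforce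
    qed
  qed (simp add: d_def)
  have fac: "mu (as ! k) (bs ! k) / mu (as ! (k + 1)) (bs ! k) = d (k + 1) / d k" if k: "k < m - 1" for k
  proof -
    have ea: "(as ! k, bs ! k) \<in> E" and eb: "(as ! (k + 1), bs ! k) \<in> E" using e k by auto
    have wp: "Wf (Inr (bs ! k)) > 0" using Wf ea by (auto simp: mult_pos_pos)
    have w1: "Wf (Inl (as ! k)) > 0" "Wf (Inl (as ! (k+1))) > 0" using Wf ea eb by auto
    show ?thesis using k unfolding mu_eq[OF ea] mu_eq[OF eb] d_def using wp w1 by (auto simp: field_simps)
  qed
  have "gain_cc E mu i i' = (\<Prod>k < m - 1. d (k + 1) / d k)"
    unfolding g using fac by (rule prod.cong[OF refl]) simp
  also have "\<dots> = d (m - 1) / d 0" using prod_tel2[of d "m - 1"] dpos by (metis less_irrefl)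
  also have "\<dots> = Wf (Inl i') / Wf (Inl i)" using m1 a0 al unfolding d_def by simp
  finally show ?thesis .
qed




definition st :: "nat + nat \<Rightarrow> nat + nat \<Rightarrow> nat \<Rightarrow> nat \<Rightarrow> real" where
  "st x y i j = (if x = Inr j \<and> y = Inl i then 1 else if x = Inl i \<and> y = Inr j then -1 else 0)"

fun fl :: "(nat + nat) list \<Rightarrow> nat \<Rightarrow> nat \<Rightarrow> real" where
  "fl [] i j = 0"
| "fl [x] i j = 0"
| "fl (x # y # xs) i j = st x y i j + fl (y # xs) i j"

definition ind :: "bool \<Rightarrow> real" where "ind b = (if b then 1 else 0)"

lemma fl_zero: "successively (graph_adj E) vs \<Longrightarrow> (i, j) \<notin> E \<Longrightarrow> fl vs i j = 0"
proof (induction vs i j rule: fl.induct)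
  case (3 x y xs i j)
  have "st x y i j = 0" using 3(2,3) unfolding st_def by (cases x; cases y) auto
  then show ?case using 3 by simp
qed auto

lemma st_row:
  assumes sub: "E \<subseteq> {..<nI} \<times> {..<nJ}" and adj: "graph_adj E x y"
  shows "(\<Sum>j \<in> {j. j < nJ \<and> (i, j) \<in> E}. st x y i j) = ind (y = Inl i) - ind (x = Inl i)"
proof (cases x)
  case (Inl a)
  then obtain b where y: "y = Inr b" and e: "(a, b) \<in> E" using adj by (cases y) auto
  have bn: "b < nJ" using sub e by auto
  have "(\<Sum>j \<in> {j. j < nJ \<and> (i, j) \<in> E}. st x y i j) = (\<Sum>j \<in> {j. j < nJ \<and> (i, j) \<in> E}. if b = j then (if a = i then -1 else 0) else 0)"
    by (rule sum.cong) (auto simp: st_def Inl y)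
  also have "\<dots> = (if a = i then -1 else 0)" using bn e by (auto simp: sum.delta)
  finally show ?thesis by (simp add: Inl y ind_def)
next
  case (Inr b)
  then obtain a where y: "y = Inl a" and e: "(a, b) \<in> E" using adj by (cases y) auto
  have bn: "b < nJ" using sub e by auto
  have "(\<Sum>j \<in> {j. j < nJ \<and> (i, j) \<in> E}. st x y i j) = (\<Sum>j \<in> {j. j < nJ \<and> (i, j) \<in> E}. if b = j then (if a = i then 1 else 0) else 0)"
    by (rule sum.cong) (auto simp: st_def Inr y)
  also have "\<dots> = (if a = i then 1 else 0)" using bn e by (auto simp: sum.delta)
  finally show ?thesis by (simp add: Inr y ind_def)
qed

lemma st_col:
  assumes sub: "E \<subseteq> {..<nI} \<times> {..<nJ}" and adj: "graph_adj E x y"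
  shows "(\<Sum>i \<in> {i. i < nI \<and> (i, j) \<in> E}. st x y i j) = ind (x = Inr j) - ind (y = Inr j)"
proof (cases x)
  case (Inl a)
  then obtain b where y: "y = Inr b" and e: "(a, b) \<in> E" using adj by (cases y) auto
  have an: "a < nI" using sub e by auto
  have "(\<Sum>i \<in> {i. i < nI \<and> (i, j) \<in> E}. st x y i j) = (\<Sum>i \<in> {i. i < nI \<and> (i, j) \<in> E}. if a = i then (if b = j then -1 else 0) else 0)"
    by (rule sum.cong) (auto simp: st_def Inl y)
  also have "\<dots> = (if b = j then -1 else 0)" using an e by (auto simp: sum.delta)
  finally show ?thesis by (simp add: Inl y ind_def)
next
  case (Inr b)
  then obtain a where y: "y = Inl a" and e: "(a, b) \<in> E" using adj by (cases y) auto
  have an: "a < nI" using sub e by auto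
  have "(\<Sum>i \<in> {i. i < nI \<and> (i, j) \<in> E}. st x y i j) = (\<Sum>i \<in> {i. i < nI \<and> (i, j) \<in> E}. if a = i then (if b = j then 1 else 0) else 0)"
    by (rule sum.cong) (auto simp: st_def Inr y)
  also have "\<dots> = (if b = j then 1 else 0)" using an e by (auto simp: sum.delta)
  finally show ?thesis by (simp add: Inr y ind_def)
qed

lemma fl_row:
  assumes sub: "E \<subseteq> {..<nI} \<times> {..<nJ}"
  shows "successively (graph_adj E) vs \<Longrightarrow> vs \<noteq> [] \<Longrightarrow>
    (\<Sum>j \<in> {j. j < nJ \<and> (i, j) \<in> E}. fl vs i j) = ind (last vs = Inl i) - ind (hd vs = Inl i)"
proof (induction vs rule: induct_list012)
  case (3 x y xs)
  have a: "graph_adj E x y" and s: "successively (graph_adj E) (y # xs)" using 3(3) by auto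
  have "(\<Sum>j \<in> {j. j < nJ \<and> (i, j) \<in> E}. fl (x # y # xs) i j)
      = (\<Sum>j \<in> {j. j < nJ \<and> (i, j) \<in> E}. st x y i j) + (\<Sum>j \<in> {j. j < nJ \<and> (i, j) \<in> E}. fl (y # xs) i j)"
    by (simp add: sum.distrib)
  also have "\<dots> = (ind (y = Inl i) - ind (x = Inl i)) + (ind (last (y # xs) = Inl i) - ind (y = Inl i))"
    using st_row[OF sub a] 3(2)[OF s] by simp
  finally show ?case by simp
qed (auto simp: ind_def)

lemma fl_col:
  assumes sub: "E \<subseteq> {..<nI} \<times> {..<nJ}"
  shows "successively (graph_adj E) vs \<Longrightarrow> vs \<noteq> [] \<Longrightarrow>
    (\<Sum>i \<in> {i. i < nI \<and> (i, j) \<in> E}. fl vs i j) = ind (hd vs = Inr j) - ind (last vs = Inr j)"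
proof (induction vs rule: induct_list012)
  case (3 x y xs)
  have a: "graph_adj E x y" and s: "successively (graph_adj E) (y # xs)" using 3(3) by auto
  have "(\<Sum>i \<in> {i. i < nI \<and> (i, j) \<in> E}. fl (x # y # xs) i j)
      = (\<Sum>i \<in> {i. i < nI \<and> (i, j) \<in> E}. st x y i j) + (\<Sum>i \<in> {i. i < nI \<and> (i, j) \<in> E}. fl (y # xs) i j)"
    by (simp add: sum.distrib)
  also have "\<dots> = (ind (x = Inr j) - ind (y = Inr j)) + (ind (y = Inr j) - ind (last (y # xs) = Inr j))"
    using st_col[OF sub a] 3(2)[OF s] by simp
  finally show ?case by simp
qed (auto simp: ind_def)




lemma swapE:
  fixes g :: "nat \<Rightarrow> nat \<Rightarrow> real"
  shows "(\<Sum>i<nI. \<Sum>j\<in>{j. j < nJ \<and> (i, j) \<in> E}. g i j) = (\<Sum>j<nJ. \<Sum>i\<in>{i. i < nI \<and> (i, j) \<in> E}. g i j)"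
proof -
  have f: "finite {..<nI}" "finite {..<nJ}" by auto
  from sum.swap_restrict[OF f, of g "\<lambda>i j. (i, j) \<in> E"] show ?thesis by simp
qed

lemma sum_ind_delta:
  fixes a :: "nat \<Rightarrow> real"
  assumes "i < n"
  shows "(\<Sum>i'<n. a i' * (ind (i' = i) - c)) = a i - c * (\<Sum>i'<n. a i')"
proof -
  have "(\<Sum>i'<n. a i' * (ind (i' = i) - c)) = (\<Sum>i'<n. (if i' = i then a i' else 0) - c * a i')"
    by (rule sum.cong) (auto simp: ind_def algebra_simps)
  also have "\<dots> = (\<Sum>i'<n. (if i' = i then a i' else 0)) - (\<Sum>i'<n. c * a i')"
    by (rule sum_subtractf)
  also have "\<dots> = a i - c * (\<Sum>i'<n. a i')" using assms by (simp add: sum_distrib_left)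
  finally show ?thesis .
qed

lemma swss_value:
  fixes w v :: "nat \<Rightarrow> real"
  assumes sub: "E \<subseteq> {..<nI} \<times> {..<nJ}"
    and reach: "\<And>u. u \<in> graph_vertices nI nJ \<Longrightarrow> (graph_adj E)\<^sup>*\<^sup>* (Inl 0) u"
    and wpos: "\<forall>i<nI. w i > 0" and vpos: "\<forall>j<nJ. v j > 0"
    and edge: "\<forall>(i, j) \<in> E. v j = w i * mu i j"
    and ppos: "\<forall>i<nI. p i > 0" and nI: "nI \<ge> 1"
  shows "swss_param nI nJ E mu lam_hat th p =
     ((\<Sum>j<nJ. v j * th j) - (\<Sum>i<nI. w i * lam_hat i)) / (\<Sum>i<nI. w i * p i)"
proof -
  define C where "C = (\<Sum>j<nJ. v j * th j)"
  define Lw where "Lw = (\<Sum>i<nI. w i * lam_hat i)"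
  define Pw where "Pw = (\<Sum>i<nI. w i * p i)"
  define T where "T = (C - Lw) / Pw"
  have Pw: "Pw > 0" unfolding Pw_def
    by (rule sum_pos) (use wpos ppos nI in \<open>auto simp: lessThan_empty_iff\<close>)
  define S where "S = {vt. \<exists>\<kappa>. swss_feasible nI nJ E mu lam_hat th p vt \<kappa>}"
  have mu_over: "mu i j / v j = 1 / w i" if "(i, j) \<in> E" for i j
  proof -
    have "i < nI" "j < nJ" using that sub by auto
    then have "w i > 0" "v j > 0" using wpos vpos by auto
    then show ?thesis using edge that by (auto simp: field_simps)
  qed
  have ub: "vt \<le> T" if vS: "vt \<in> S" for vt
  proof -
    obtain \<kappa> where f: "swss_feasible nI nJ E mu lam_hat th p vt \<kappa>" using vS S_def by blast
    have row: "lam_hat i \<le> (\<Sum>j\<in>{j. j < nJ \<and> (i, j) \<in> E}. mu i j * \<kappa> i j) - vt * p i" if "i < nI" for i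
      using f that unfolding swss_feasible_def by blast
    have col: "(\<Sum>i\<in>{i. i < nI \<and> (i, j) \<in> E}. \<kappa> i j) = th j" if "j < nJ" for j
      using f that unfolding swss_feasible_def by blast
    have "(\<Sum>i<nI. w i * (\<Sum>j\<in>{j. j < nJ \<and> (i, j) \<in> E}. mu i j * \<kappa> i j))
        = (\<Sum>i<nI. \<Sum>j\<in>{j. j < nJ \<and> (i, j) \<in> E}. v j * \<kappa> i j)"
      by (rule sum.cong[OF refl], simp add: sum_distrib_left, rule sum.cong[OF refl])
         (use edge in auto)
    also have "\<dots> = (\<Sum>j<nJ. \<Sum>i\<in>{i. i < nI \<and> (i, j) \<in> E}. v j * \<kappa> i j)" by (rule swapE)
    also have "\<dots> = C" unfolding C_def using col by (simp add: sum_distrib_left[symmetric])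
    finally have id0: "(\<Sum>i<nI. w i * (\<Sum>j\<in>{j. j < nJ \<and> (i, j) \<in> E}. mu i j * \<kappa> i j)) = C" .
    define x where "x i = (\<Sum>j\<in>{j. j < nJ \<and> (i, j) \<in> E}. mu i j * \<kappa> i j)" for i
    have id: "(\<Sum>i<nI. w i * x i) = C" using id0 unfolding x_def .
    have "Lw \<le> (\<Sum>i<nI. w i * (x i - vt * p i))"
      unfolding Lw_def
      by (rule sum_mono) (use row wpos in \<open>auto intro: mult_left_mono simp: x_def\<close>)
    also have "\<dots> = (\<Sum>i<nI. w i * x i) - vt * Pw" unfolding Pw_def
      by (simp add: right_diff_distrib sum_subtractf sum_distrib_left algebra_simps)
    also have "\<dots> = C - vt * Pw" using id by simp
    finally have "vt * Pw \<le> C - Lw" by simp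
    then show ?thesis unfolding T_def using Pw by (simp add: field_simps)
  qed
  define y where "y i = lam_hat i + T * p i" for i
  define a where "a i = w i * y i" for i
  define b where "b j = v j * th j" for j
  have sumab: "(\<Sum>i<nI. a i) = (\<Sum>j<nJ. b j)"
  proof -
    have "(\<Sum>i<nI. a i) = Lw + T * Pw" unfolding a_def y_def Lw_def Pw_def
      by (simp add: algebra_simps sum.distrib sum_distrib_left)
    also have "\<dots> = C" unfolding T_def using Pw by simp
    finally show ?thesis unfolding C_def b_def .
  qed
  define wk where "wk u = (SOME vs. walk E vs \<and> hd vs = Inl 0 \<and> last vs = u)" for u
  have wk: "walk E (wk u) \<and> hd (wk u) = Inl 0 \<and> last (wk u) = u" if "u \<in> graph_vertices nI nJ" for u
    unfolding wk_def by (rule someI_ex) (use walk_rtranclp[OF reach[OF that]] in blast)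
  have vI: "Inl i \<in> graph_vertices nI nJ" if "i < nI" for i using that by (simp add: graph_vertices_def)
  have vJ: "Inr j \<in> graph_vertices nI nJ" if "j < nJ" for j using that by (simp add: graph_vertices_def)
  define phi where "phi i j = (\<Sum>i'<nI. a i' * fl (wk (Inl i')) i j) - (\<Sum>j'<nJ. b j' * fl (wk (Inr j')) i j)" for i j
  define \<kappa> where "\<kappa> i j = phi i j / v j" for i j
  have phi_row: "(\<Sum>j\<in>{j. j < nJ \<and> (i, j) \<in> E}. phi i j) = a i" if i: "i < nI" for i
  proof -
    have r1: "(\<Sum>j\<in>{j. j < nJ \<and> (i, j) \<in> E}. fl (wk (Inl i')) i j) = ind (i' = i) - ind (0 = i)" if "i' < nI" for i'
      using fl_row[OF sub, of "wk (Inl i')" i] wk[OF vI[OF that]] by (simp add: walk_def)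
    have r2: "(\<Sum>j\<in>{j. j < nJ \<and> (i, j) \<in> E}. fl (wk (Inr j')) i j) = 0 - ind (0 = i)" if "j' < nJ" for j'
      using fl_row[OF sub, of "wk (Inr j')" i] wk[OF vJ[OF that]] by (simp add: walk_def ind_def)
    have "(\<Sum>j\<in>{j. j < nJ \<and> (i, j) \<in> E}. phi i j)
       = (\<Sum>i'<nI. a i' * (\<Sum>j\<in>{j. j < nJ \<and> (i, j) \<in> E}. fl (wk (Inl i')) i j))
         - (\<Sum>j'<nJ. b j' * (\<Sum>j\<in>{j. j < nJ \<and> (i, j) \<in> E}. fl (wk (Inr j')) i j))"
      unfolding phi_def by (simp add: sum_subtractf sum_distrib_left sum.swap[of _ "{..<nI}"] sum.swap[of _ "{..<nJ}"])
    also have "\<dots> = (\<Sum>i'<nI. a i' * (ind (i' = i) - ind (0 = i))) - (\<Sum>j'<nJ. b j' * (0 - ind (0 = i)))"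
      using r1 r2 by simp
    also have "\<dots> = a i" using sum_ind_delta[OF i, of a "ind (0 = i)"] sumab
      by (simp add: sum_negf sum_distrib_left sum_distrib_right algebra_simps)
    finally show ?thesis .
  qed
  have phi_col: "(\<Sum>i\<in>{i. i < nI \<and> (i, j) \<in> E}. phi i j) = b j" if j: "j < nJ" for j
  proof -
    have r1: "(\<Sum>i\<in>{i. i < nI \<and> (i, j) \<in> E}. fl (wk (Inl i')) i j) = 0" if "i' < nI" for i'
      using fl_col[OF sub, of "wk (Inl i')" j] wk[OF vI[OF that]] by (simp add: walk_def ind_def)
    have r2: "(\<Sum>i\<in>{i. i < nI \<and> (i, j) \<in> E}. fl (wk (Inr j')) i j) = - ind (j' = j)" if "j' < nJ" for j'
      using fl_col[OF sub, of "wk (Inr j')" j] wk[OF vJ[OF that]] by (simp add: walk_def ind_def)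
    have "(\<Sum>i\<in>{i. i < nI \<and> (i, j) \<in> E}. phi i j)
       = (\<Sum>i'<nI. a i' * (\<Sum>i\<in>{i. i < nI \<and> (i, j) \<in> E}. fl (wk (Inl i')) i j))
         - (\<Sum>j'<nJ. b j' * (\<Sum>i\<in>{i. i < nI \<and> (i, j) \<in> E}. fl (wk (Inr j')) i j))"
      unfolding phi_def by (simp add: sum_subtractf sum_distrib_left sum.swap[of _ "{..<nI}"] sum.swap[of _ "{..<nJ}"])
    also have "\<dots> = - (\<Sum>j'<nJ. b j' * (- ind (j' = j)))"
      using r1 r2 by simp
    also have "\<dots> = b j" using j by (simp add: ind_def sum_negf[symmetric] if_distrib cong: if_cong)
    finally show ?thesis .
  qed
  have feas: "swss_feasible nI nJ E mu lam_hat th p T \<kappa>"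
    unfolding swss_feasible_def
  proof (intro conjI allI impI)
    fix i j assume "i < nI" "j < nJ" "(i, j) \<notin> E"
    have "fl (wk u) i j = 0" if "u \<in> graph_vertices nI nJ" for u
      using fl_zero[of E "wk u" i j] wk[OF that] \<open>(i, j) \<notin> E\<close> by (simp add: walk_def)
    then show "\<kappa> i j = 0" unfolding \<kappa>_def phi_def using vI vJ by simp
  next
    fix i assume i: "i < nI"
    have "(\<Sum>j\<in>{j. j < nJ \<and> (i, j) \<in> E}. mu i j * \<kappa> i j) = (\<Sum>j\<in>{j. j < nJ \<and> (i, j) \<in> E}. phi i j / w i)"
    proof (rule sum.cong[OF refl])
      fix j assume "j \<in> {j. j < nJ \<and> (i, j) \<in> E}"
      then have e: "(i, j) \<in> E" by simp
      have "mu i j * \<kappa> i j = (mu i j / v j) * phi i j" unfolding \<kappa>_def by simp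
      also have "\<dots> = phi i j / w i" using mu_over[OF e] by simp
      finally show "mu i j * \<kappa> i j = phi i j / w i" .
    qed
    also have "\<dots> = a i / w i" using phi_row[OF i] by (simp add: sum_divide_distrib[symmetric])
    also have "\<dots> = y i" using wpos i unfolding a_def by force
    finally show "lam_hat i \<le> (\<Sum>j\<in>{j. j < nJ \<and> (i, j) \<in> E}. mu i j * \<kappa> i j) - T * p i"
      unfolding y_def by simp
  next
    fix j assume j: "j < nJ"
    have "(\<Sum>i\<in>{i. i < nI \<and> (i, j) \<in> E}. \<kappa> i j) = b j / v j"
      unfolding \<kappa>_def using phi_col[OF j] by (simp add: sum_divide_distrib[symmetric])
    also have "\<dots> = th j" using vpos j unfolding b_def by force
    finally show "(\<Sum>i\<in>{i. i < nI \<and> (i, j) \<in> E}. \<kappa> i j) = th j" .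
  qed
  have "Sup S = T"
    by (rule cSup_eq_maximum) (use feas ub in \<open>auto simp: S_def\<close>)
  then show ?thesis unfolding swss_param_def S_def T_def C_def Lw_def Pw_def .
qed




theorem corollary1:
  fixes nI nJ :: nat
    and E :: "(nat \<times> nat) set"
    and lamn :: "nat \<Rightarrow> nat \<Rightarrow> real"
    and mun :: "nat \<Rightarrow> nat \<Rightarrow> nat \<Rightarrow> real"
    and Nn :: "nat \<Rightarrow> nat \<Rightarrow> nat"
    and lam nu lam_hat nu_hat :: "nat \<Rightarrow> real"
    and mu mu_hat :: "nat \<Rightarrow> nat \<Rightarrow> real"
    and \<xi>s :: "nat \<Rightarrow> nat \<Rightarrow> real"
    and p :: "nat \<Rightarrow> real"
  assumes nI_pos: "nI \<ge> 1" and nJ_pos: "nJ \<ge> 1"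
    and tree: "is_tree nI nJ E"
    and lamn_pos: "\<forall>n \<ge> 1. \<forall>i < nI. lamn n i > 0"
    and mun_pos: "\<forall>n \<ge> 1. \<forall>(i, j) \<in> E. mun n i j > 0"
    and lam_pos: "\<forall>i < nI. lam i > 0"
    and nu_pos: "\<forall>j < nJ. nu j > 0"
    and mu_pos: "\<forall>(i, j) \<in> E. mu i j > 0"
    and lim_lam: "\<forall>i < nI. (\<lambda>n. lamn n i / real n) \<longlonglongrightarrow> lam i"
    and lim_N: "\<forall>j < nJ. (\<lambda>n. real (Nn n j) / real n) \<longlonglongrightarrow> nu j"
    and lim_mu: "\<forall>(i, j) \<in> E. (\<lambda>n. mun n i j) \<longlonglongrightarrow> mu i j"
    and lim_lam_hat: "\<forall>i < nI. (\<lambda>n. (lamn n i - real n * lam i) / sqrt (real n)) \<longlonglongrightarrow> lam_hat i"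
    and lim_mu_hat: "\<forall>(i, j) \<in> E. (\<lambda>n. sqrt (real n) * (mun n i j - mu i j)) \<longlonglongrightarrow> mu_hat i j"
    and lim_nu_hat: "\<forall>j < nJ. (\<lambda>n. sqrt (real n) * (real (Nn n j) / real n - nu j)) \<longlonglongrightarrow> nu_hat j"
    and crp_opt: "crp_optimal nI nJ E mu nu lam \<xi>s"
    and crp_unique: "\<forall>\<xi>. crp_optimal nI nJ E mu nu lam \<xi> \<longrightarrow> (\<forall>i < nI. \<forall>j < nJ. \<xi> i j = \<xi>s i j)"
    and crp_sum: "\<forall>j < nJ. (\<Sum>i < nI. \<xi>s i j) = 1"
    and crp_pos: "\<forall>(i, j) \<in> E. \<xi>s i j > 0"
    and p_pos: "\<forall>i < nI. p i > 0"
    and p_sum: "(\<Sum>i < nI. p i) = 1"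
    and nonzero: "swss_param nI nJ E mu lam_hat (theta_param nI E mu nu mu_hat nu_hat \<xi>s) p \<noteq> 0"
  shows "(\<forall>i < nI. ((\<Sum>j < nJ. gain_cp E mu i j * theta_param nI E mu nu mu_hat nu_hat \<xi>s j)
                     - (\<Sum>l < nI. gain_cc E mu i l * lam_hat l)) / p i \<noteq> 0)
       \<and> 1 / swss_param nI nJ E mu lam_hat (theta_param nI E mu nu mu_hat nu_hat \<xi>s) p
         = (\<Sum>i < nI. 1 / (((\<Sum>j < nJ. gain_cp E mu i j * theta_param nI E mu nu mu_hat nu_hat \<xi>s j)
                     - (\<Sum>l < nI. gain_cc E mu i l * lam_hat l)) / p i))"
proof -
  have sub: "E \<subseteq> {..<nI} \<times> {..<nJ}" and conn: "graph_connected nI nJ E" and acyc: "graph_acyclic E"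
    using tree unfolding is_tree_def by auto
  have vI: "Inl i \<in> graph_vertices nI nJ" if "i < nI" for i using that by (simp add: graph_vertices_def)
  have vJ: "Inr j \<in> graph_vertices nI nJ" if "j < nJ" for j using that by (simp add: graph_vertices_def)
  have reach: "(graph_adj E)\<^sup>*\<^sup>* u u'" if "u \<in> graph_vertices nI nJ" "u' \<in> graph_vertices nI nJ" for u u'
    using conn that unfolding graph_connected_def by blast
  have r0: "(graph_adj E)\<^sup>*\<^sup>* (Inl 0) u" if "u \<in> graph_vertices nI nJ" for u
    using reach[OF vI that] nI_pos by simp
  have mu: "\<forall>(i, j) \<in> E. mu i j > 0" using mu_pos by blast
  define Wf where "Wf = Wt E mu"
  have Wfpos: "Wf u > 0" if "u \<in> graph_vertices nI nJ" for u
    unfolding Wf_def using Wt_pos[OF acyc r0[OF that] mu] .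
  have Wedge: "\<forall>(a, b) \<in> E. Wf (Inr b) = Wf (Inl a) * mu a b \<and> Wf (Inl a) > 0 \<and> mu a b > 0"
  proof (intro ballI, clarify)
    fix a b assume e: "(a, b) \<in> E"
    then have an: "a < nI" using sub by auto
    show "Wf (Inr b) = Wf (Inl a) * mu a b \<and> Wf (Inl a) > 0 \<and> mu a b > 0"
      using Wt_edge[OF acyc r0[OF vI[OF an]] mu e] Wfpos[OF vI[OF an]] mu e unfolding Wf_def by auto
  qed
  define w where "w i = Wf (Inl i)" for i
  define v where "v j = Wf (Inr j)" for j
  have wpos: "\<forall>i<nI. w i > 0" using Wfpos vI unfolding w_def by blast
  have vpos: "\<forall>j<nJ. v j > 0" using Wfpos vJ unfolding v_def by blast
  have edge: "\<forall>(i, j) \<in> E. v j = w i * mu i j" using Wedge unfolding v_def w_def by auto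
  define th where "th = theta_param nI E mu nu mu_hat nu_hat \<xi>s"
  define C where "C = (\<Sum>j<nJ. v j * th j)"
  define Lw where "Lw = (\<Sum>i<nI. w i * lam_hat i)"
  define Pw where "Pw = (\<Sum>i<nI. w i * p i)"
  have sw: "swss_param nI nJ E mu lam_hat th p = (C - Lw) / Pw"
    unfolding C_def Lw_def Pw_def
    by (rule swss_value[OF sub r0 wpos vpos edge p_pos nI_pos])
  have num: "(\<Sum>j<nJ. gain_cp E mu i j * th j) - (\<Sum>l<nI. gain_cc E mu i l * lam_hat l) = (C - Lw) / w i"
    if i: "i < nI" for i
  proof -
    have g1: "gain_cp E mu i j = v j / w i" if "j < nJ" for j
      unfolding v_def w_def using gain_cp_W[OF acyc reach[OF vI[OF i] vJ[OF that]] Wedge] .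
    have g2: "gain_cc E mu i l = w l / w i" if "l < nI" for l
      unfolding w_def using gain_cc_W[OF acyc reach[OF vI[OF i] vI[OF that]] Wedge Wfpos[OF vI[OF i]]] .
    have "(\<Sum>j<nJ. gain_cp E mu i j * th j) = (\<Sum>j<nJ. v j * th j / w i)"
      by (rule sum.cong[OF refl]) (simp add: g1)
    also have "\<dots> = C / w i" unfolding C_def by (simp add: sum_divide_distrib)
    finally have a: "(\<Sum>j<nJ. gain_cp E mu i j * th j) = C / w i" .
    have "(\<Sum>l<nI. gain_cc E mu i l * lam_hat l) = (\<Sum>l<nI. w l * lam_hat l / w i)"
      by (rule sum.cong[OF refl]) (simp add: g2)
    also have "\<dots> = Lw / w i" unfolding Lw_def by (simp add: sum_divide_distrib)
    finally have b: "(\<Sum>l<nI. gain_cc E mu i l * lam_hat l) = Lw / w i" .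
    show ?thesis using a b by (simp add: diff_divide_distrib)
  qed
  have Pw: "Pw > 0" unfolding Pw_def
    by (rule sum_pos) (use wpos p_pos nI_pos in \<open>auto simp: lessThan_empty_iff\<close>)
  have CL: "C - Lw \<noteq> 0" using nonzero sw unfolding th_def by auto
  have R: "((C - Lw) / w i) / p i = (C - Lw) / (w i * p i)" for i by simp
  have part1: "\<forall>i < nI. ((\<Sum>j < nJ. gain_cp E mu i j * th j) - (\<Sum>l < nI. gain_cc E mu i l * lam_hat l)) / p i \<noteq> 0"
    using num CL wpos p_pos by force
  have "(\<Sum>i < nI. 1 / (((\<Sum>j < nJ. gain_cp E mu i j * th j) - (\<Sum>l < nI. gain_cc E mu i l * lam_hat l)) / p i))
      = (\<Sum>i < nI. w i * p i / (C - Lw))"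
    by (rule sum.cong[OF refl]) (simp add: num)
  also have "\<dots> = Pw / (C - Lw)" unfolding Pw_def by (simp add: sum_divide_distrib)
  also have "\<dots> = 1 / swss_param nI nJ E mu lam_hat th p" using sw by simp
  finally have part2: "1 / swss_param nI nJ E mu lam_hat th p =
      (\<Sum>i < nI. 1 / (((\<Sum>j < nJ. gain_cp E mu i j * th j) - (\<Sum>l < nI. gain_cc E mu i l * lam_hat l)) / p i))" ..
  show ?thesis using part1 part2 unfolding th_def by blast
qed


end
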